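(* Let $(X,\tau)$ be a fuzzifying topological space and let $\beta_P\in\Im(P(X))$ satisfy $\beta_P(A)\le\tau_P(A)$ for all $A\subseteq X$. Then $\beta_P$ is a pre-base of $\tau_P$ if and only if $\tau_P=\beta_P^{(\cup)}$, where $$\beta_P^{(\cup)}(A)=\bigvee\Big\{\bigwedge_{\lambda\in\Lambda}\beta_P(B_\lambda)\;:\;\{B_\lambda\}_{\lambda\in\Lambda}\subseteq P(X),\ \bigcup_{\lambda\in\Lambda}B_\lambda=A\Big\}.$$
   Context: $\Im(Y)$ denotes the set of fuzzy subsets $\mu:Y\to[0,1]$ of a set $Y$, and $P(X)$ the power set of $X$. A fuzzifying topology on $X$ is $\tau\in\Im(P(X))$ with $\tau(X)=1$, $\tau(A\cap B)\ge\min(\tau(A),\tau(B))$ and $\tau(\bigcup_\lambda A_\lambda)\ge\inf_\lambda\tau(A_\lambda)$. Its neighbourhood degrees are $N_x(A)=\sup_{x\in B\subseteq A}\tau(B)$, its closure is $Cl(A)(x)=1-N_x(X\setminus A)$, and for a fuzzy set $\mu\in\Im(X)$, $Int(\mu)(x)=\sup_{B\subseteq X,\,x\in B}\min(\tau(B),\inf_{y\in B}\mu(y))$. The fuzzifying pre-open sets are $\tau_P(A)=\inf_{x\in A}Int(Cl(A))(x)$, and the pre-neighbourhood degrees are $N^P_x(A)=\sup_{x\in B\subseteq A}\tau_P(B)$. A fuzzy family $\beta_P\in\Im(P(X))$ with $\beta_P\le\tau_P$ pointwise is called a pre-base of $\tau_P$ if for all $x\in X$ and $A\subseteq X$, $N^P_x(A)\le\sup_{x\in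 B\subseteq A}\beta_P(B)$. *)

theory Defs
  imports Complex_Main
begin

text \<open>Sup/Inf on [0,1] with lattice conventions: sup of empty set is 0, inf of empty set is 1.\<close>
definition fsup :: "real set \<Rightarrow> real" where
  "fsup S = (if S = {} then 0 else Sup S)"
definition finf :: "real set \<Rightarrow> real" where
  "finf S = (if S = {} then 1 else Inf S)"

text \<open>Fuzzy subsets of P(X): functions on sets with values in [0,1] (on subsets of X).\<close>
definition fuzzy_family :: "'a set \<Rightarrow> ('a set \<Rightarrow> real) \<Rightarrow> bool" where
  "fuzzy_family X \<tau> \<longleftrightarrow> (\<forall>A. A \<subseteq> X \<longrightarrow> 0 \<le> \<tau> A \<and> \<tau> A \<le> 1)"

definition fuzzifying_topology :: "'a set \<Rightarrow> ('a set \<Rightarrow> real) \<Rightarrow> bool" where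
  "fuzzifying_topology X \<tau> \<longleftrightarrow> fuzzy_family X \<tau> \<and> \<tau> X = 1
     \<and> (\<forall>A B. A \<subseteq> X \<longrightarrow> B \<subseteq> X \<longrightarrow> \<tau> (A \<inter> B) \<ge> min (\<tau> A) (\<tau> B))
     \<and> (\<forall>\<A>. \<A> \<subseteq> Pow X \<longrightarrow> \<tau> (\<Union>\<A>) \<ge> finf (\<tau> ` \<A>))"

definition nbhd :: "'a set \<Rightarrow> ('a set \<Rightarrow> real) \<Rightarrow> 'a \<Rightarrow> 'a set \<Rightarrow> real" where
  "nbhd X \<tau> x A = fsup {\<tau> B | B. x \<in> B \<and> B \<subseteq> A}"

definition fclosure :: "'a set \<Rightarrow> ('a set \<Rightarrow> real) \<Rightarrow> 'a set \<Rightarrow> 'a \<Rightarrow> real" where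
  "fclosure X \<tau> A x = 1 - nbhd X \<tau> x (X - A)"

definition finterior :: "'a set \<Rightarrow> ('a set \<Rightarrow> real) \<Rightarrow> ('a \<Rightarrow> real) \<Rightarrow> 'a \<Rightarrow> real" where
  "finterior X \<tau> \<mu> x = fsup {min (\<tau> B) (finf (\<mu> ` B)) | B. B \<subseteq> X \<and> x \<in> B}"

definition preopen :: "'a set \<Rightarrow> ('a set \<Rightarrow> real) \<Rightarrow> 'a set \<Rightarrow> real" where
  "preopen X \<tau> A = finf ((finterior X \<tau> (fclosure X \<tau> A)) ` A)"

definition pre_nbhd :: "'a set \<Rightarrow> ('a set \<Rightarrow> real) \<Rightarrow> 'a \<Rightarrow> 'a set \<Rightarrow> real" where
  "pre_nbhd X \<tau> x A = fsup {preopen X \<tau> B | B. x \<in> B \<and> B \<subseteq> A}"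

definition is_pre_base :: "'a set \<Rightarrow> ('a set \<Rightarrow> real) \<Rightarrow> ('a set \<Rightarrow> real) \<Rightarrow> bool" where
  "is_pre_base X \<tau> \<beta> \<longleftrightarrow> (\<forall>A. A \<subseteq> X \<longrightarrow> \<beta> A \<le> preopen X \<tau> A)
     \<and> (\<forall>x\<in>X. \<forall>A. A \<subseteq> X \<longrightarrow> pre_nbhd X \<tau> x A \<le> fsup {\<beta> B | B. x \<in> B \<and> B \<subseteq> A})"

definition union_closure :: "'a set \<Rightarrow> ('a set \<Rightarrow> real) \<Rightarrow> 'a set \<Rightarrow> real" where
  "union_closure X \<beta> A = fsup {finf (\<beta> ` \<B>) | \<B>. \<B> \<subseteq> Pow X \<and> \<Union>\<B> = A}"

end

theory Submission
  imports Defs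
begin

lemma fsup_upper: "\<forall>s\<in>S. s \<le> 1 \<Longrightarrow> s \<in> S \<Longrightarrow> s \<le> fsup S"
  unfolding fsup_def by (auto intro!: cSup_upper bdd_aboveI)

lemma fsup_least: "\<forall>s\<in>S. s \<le> c \<Longrightarrow> 0 \<le> c \<Longrightarrow> fsup S \<le> c"
  unfolding fsup_def by (auto intro!: cSup_least)

lemma finf_lower: "\<forall>s\<in>S. 0 \<le> s \<Longrightarrow> s \<in> S \<Longrightarrow> finf S \<le> s"
  unfolding finf_def by (auto intro!: cInf_lower bdd_belowI)

lemma finf_greatest: "\<forall>s\<in>S. c \<le> s \<Longrightarrow> c \<le> 1 \<Longrightarrow> c \<le> finf S"
  unfolding finf_def by (auto intro!: cInf_greatest)

lemma fsup_01: "\<forall>s\<in>S. 0 \<le> s \<and> s \<le> 1 \<Longrightarrow> 0 \<le> fsup S \<and> fsup S \<le> 1"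
proof -
  assume h: "\<forall>s\<in>S. 0 \<le> s \<and> s \<le> 1"
  have "fsup S \<le> 1" using h by (intro fsup_least) auto
  moreover have "0 \<le> fsup S"
  proof (cases "S = {}")
    case True then show ?thesis by (simp add: fsup_def)
  next
    case False then obtain s where "s \<in> S" by auto
    then have "s \<le> fsup S" using h by (intro fsup_upper) auto
    then show ?thesis using h \<open>s \<in> S\<close> by force
  qed
  ultimately show ?thesis by simp
qed

lemma finf_01: "\<forall>s\<in>S. 0 \<le> s \<and> s \<le> 1 \<Longrightarrow> 0 \<le> finf S \<and> finf S \<le> 1"
proof -
  assume h: "\<forall>s\<in>S. 0 \<le> s \<and> s \<le> 1"
  have "0 \<le> finf S" using h by (intro finf_greatest) auto
  moreover have "finf S \<le> 1"
  proof (cases "S = {}")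
    case True then show ?thesis by (simp add: finf_def)
  next
    case False then obtain s where "s \<in> S" by auto
    then have "finf S \<le> s" using h by (intro finf_lower) auto
    then show ?thesis using h \<open>s \<in> S\<close> by force
  qed
  ultimately show ?thesis by simp
qed

lemma nbhd_01:
  assumes "fuzzy_family X \<tau>"
  shows "0 \<le> nbhd X \<tau> y (X - A) \<and> nbhd X \<tau> y (X - A) \<le> 1"
  unfolding nbhd_def using assms unfolding fuzzy_family_def
  by (intro fsup_01) auto

lemma fclosure_01:
  assumes "fuzzy_family X \<tau>"
  shows "0 \<le> fclosure X \<tau> A y \<and> fclosure X \<tau> A y \<le> 1"
  unfolding fclosure_def using nbhd_01[OF assms] by auto

lemma finterior_01:
  assumes "fuzzy_family X \<tau>" "\<forall>y. 0 \<le> \<mu> y \<and> \<mu> y \<le> 1"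
  shows "0 \<le> finterior X \<tau> \<mu> x \<and> finterior X \<tau> \<mu> x \<le> 1"
proof -
  have "\<forall>s\<in>{min (\<tau> B) (finf (\<mu> ` B)) | B. B \<subseteq> X \<and> x \<in> B}. 0 \<le> s \<and> s \<le> 1"
  proof
    fix s assume "s \<in> {min (\<tau> B) (finf (\<mu> ` B)) | B. B \<subseteq> X \<and> x \<in> B}"
    then obtain B where B: "B \<subseteq> X" "s = min (\<tau> B) (finf (\<mu> ` B))" by auto
    have "0 \<le> finf (\<mu> ` B) \<and> finf (\<mu> ` B) \<le> 1" using assms(2) by (intro finf_01) auto
    moreover have "0 \<le> \<tau> B \<and> \<tau> B \<le> 1" using assms(1) B(1) unfolding fuzzy_family_def by auto
    ultimately show "0 \<le> s \<and> s \<le> 1" using B(2) by auto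
  qed
  then show ?thesis unfolding finterior_def by (rule fsup_01)
qed

lemma finterior_cl_01:
  assumes "fuzzy_family X \<tau>"
  shows "0 \<le> finterior X \<tau> (fclosure X \<tau> A) x \<and> finterior X \<tau> (fclosure X \<tau> A) x \<le> 1"
  using finterior_01[OF assms] fclosure_01[OF assms] by blast

lemma preopen_01:
  assumes "fuzzy_family X \<tau>"
  shows "0 \<le> preopen X \<tau> A \<and> preopen X \<tau> A \<le> 1"
  unfolding preopen_def using finterior_cl_01[OF assms] by (intro finf_01) auto

lemma fclosure_mono:
  assumes "fuzzy_family X \<tau>" "A \<subseteq> A'"
  shows "fclosure X \<tau> A y \<le> fclosure X \<tau> A' y"
proof -
  have "nbhd X \<tau> y (X - A') \<le> nbhd X \<tau> y (X - A)"
    unfolding nbhd_def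
  proof (rule fsup_least)
    show "0 \<le> fsup {\<tau> B |B. y \<in> B \<and> B \<subseteq> X - A}"
      using nbhd_01[OF assms(1)] unfolding nbhd_def by blast
    show "\<forall>s\<in>{\<tau> B |B. y \<in> B \<and> B \<subseteq> X - A'}. s \<le> fsup {\<tau> B |B. y \<in> B \<and> B \<subseteq> X - A}"
      using assms unfolding fuzzy_family_def by (auto intro!: fsup_upper)
  qed
  then show ?thesis unfolding fclosure_def by simp
qed

lemma finterior_mono:
  assumes "fuzzy_family X \<tau>" "\<forall>y. 0 \<le> \<mu> y \<and> \<mu> y \<le> 1" "\<forall>y. 0 \<le> \<mu>' y \<and> \<mu>' y \<le> 1"
    "\<forall>y. \<mu> y \<le> \<mu>' y"
  shows "finterior X \<tau> \<mu> x \<le> finterior X \<tau> \<mu>' x"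
  unfolding finterior_def
proof (rule fsup_least)
  show "0 \<le> fsup {min (\<tau> B) (finf (\<mu>' ` B)) |B. B \<subseteq> X \<and> x \<in> B}"
    using finterior_01[OF assms(1,3)] unfolding finterior_def by blast
  show "\<forall>s\<in>{min (\<tau> B) (finf (\<mu> ` B)) |B. B \<subseteq> X \<and> x \<in> B}.
           s \<le> fsup {min (\<tau> B) (finf (\<mu>' ` B)) |B. B \<subseteq> X \<and> x \<in> B}"
  proof
    fix s assume "s \<in> {min (\<tau> B) (finf (\<mu> ` B)) |B. B \<subseteq> X \<and> x \<in> B}"
    then obtain B where B: "B \<subseteq> X" "x \<in> B" "s = min (\<tau> B) (finf (\<mu> ` B))" by auto
    have "finf (\<mu> ` B) \<le> finf (\<mu>' ` B)"
    proof (rule finf_greatest)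
      show "finf (\<mu> ` B) \<le> 1" using finf_01[of "\<mu> ` B"] assms(2) by auto
      show "\<forall>s\<in>\<mu>' ` B. finf (\<mu> ` B) \<le> s"
        using assms(2,4) by (auto intro: order_trans[OF finf_lower])
    qed
    then have "s \<le> min (\<tau> B) (finf (\<mu>' ` B))" using B by auto
    also have "\<dots> \<le> fsup {min (\<tau> B) (finf (\<mu>' ` B)) |B. B \<subseteq> X \<and> x \<in> B}"
    proof (rule fsup_upper)
      show "min (\<tau> B) (finf (\<mu>' ` B)) \<in> {min (\<tau> B) (finf (\<mu>' ` B)) |B. B \<subseteq> X \<and> x \<in> B}"
        using B by auto
      show "\<forall>s\<in>{min (\<tau> B) (finf (\<mu>' ` B)) |B. B \<subseteq> X \<and> x \<in> B}. s \<le> 1"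
        using assms(1) unfolding fuzzy_family_def by auto
    qed
    finally show "s \<le> fsup {min (\<tau> B) (finf (\<mu>' ` B)) |B. B \<subseteq> X \<and> x \<in> B}" .
  qed
qed

lemma preopen_union:
  assumes "fuzzy_family X \<tau>"
  shows "finf (preopen X \<tau> ` F) \<le> preopen X \<tau> (\<Union>F)"
  unfolding preopen_def[of X \<tau> "\<Union>F"]
proof (rule finf_greatest)
  show "finf (preopen X \<tau> ` F) \<le> 1" using finf_01[of "preopen X \<tau> ` F"] preopen_01[OF assms] by auto
  show "\<forall>s\<in>finterior X \<tau> (fclosure X \<tau> (\<Union> F)) ` \<Union> F. finf (preopen X \<tau> ` F) \<le> s"
  proof
    fix s assume "s \<in> finterior X \<tau> (fclosure X \<tau> (\<Union> F)) ` \<Union> F"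
    then obtain y A where yA: "A \<in> F" "y \<in> A" "s = finterior X \<tau> (fclosure X \<tau> (\<Union> F)) y" by auto
    have "finf (preopen X \<tau> ` F) \<le> preopen X \<tau> A"
      using yA preopen_01[OF assms] by (intro finf_lower) auto
    also have "\<dots> \<le> finterior X \<tau> (fclosure X \<tau> A) y"
      unfolding preopen_def using yA finterior_cl_01[OF assms] by (intro finf_lower) auto
    also have "\<dots> \<le> s" unfolding yA(3)
      using fclosure_01[OF assms] fclosure_mono[OF assms, of A "\<Union>F"] yA
      by (intro finterior_mono[OF assms]) auto
    finally show "finf (preopen X \<tau> ` F) \<le> s" .
  qed
qed

lemma fsup_gtD:
  assumes "c < fsup S" "0 \<le> c" "\<forall>s\<in>S. s \<le> 1"
  shows "\<exists>s\<in>S. c < s"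
proof (cases "S = {}")
  case True then show ?thesis using assms by (simp add: fsup_def)
next
  case False
  have "bdd_above S" using assms(3) by (auto intro: bdd_aboveI)
  then show ?thesis using assms(1) False by (simp add: fsup_def less_cSup_iff)
qed

theorem theorem2p1:
  fixes X :: "'a set" and \<tau> \<beta> :: "'a set \<Rightarrow> real"
  assumes "fuzzifying_topology X \<tau>"
    and "fuzzy_family X \<beta>"
    and "\<forall>A. A \<subseteq> X \<longrightarrow> \<beta> A \<le> preopen X \<tau> A"
  shows "is_pre_base X \<tau> \<beta> \<longleftrightarrow> (\<forall>A. A \<subseteq> X \<longrightarrow> preopen X \<tau> A = union_closure X \<beta> A)"
proof -
  have ff: "fuzzy_family X \<tau>" using assms(1) unfolding fuzzifying_topology_def by auto
  have Bb: "\<And>A. A \<subseteq> X \<Longrightarrow> 0 \<le> \<beta> A \<and> \<beta> A \<le> 1" using assms(2) unfolding fuzzy_family_def by auto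
  have finfF: "\<And>F. F \<subseteq> Pow X \<Longrightarrow> 0 \<le> finf (\<beta> ` F) \<and> finf (\<beta> ` F) \<le> 1"
    using Bb by (intro finf_01) auto
  show ?thesis
  proof
    assume pb: "is_pre_base X \<tau> \<beta>"
    show "\<forall>A. A \<subseteq> X \<longrightarrow> preopen X \<tau> A = union_closure X \<beta> A"
    proof (intro allI impI)
      fix A assume AX: "A \<subseteq> X"
      have le1: "union_closure X \<beta> A \<le> preopen X \<tau> A"
        unfolding union_closure_def
      proof (rule fsup_least)
        show "0 \<le> preopen X \<tau> A" using preopen_01[OF ff] by blast
        show "\<forall>s\<in>{finf (\<beta> ` \<B>) |\<B>. \<B> \<subseteq> Pow X \<and> \<Union> \<B> = A}. s \<le> preopen X \<tau> A"
        proof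
          fix s assume "s \<in> {finf (\<beta> ` \<B>) |\<B>. \<B> \<subseteq> Pow X \<and> \<Union> \<B> = A}"
          then obtain F where F: "F \<subseteq> Pow X" "\<Union>F = A" "s = finf (\<beta> ` F)" by auto
          have "finf (\<beta> ` F) \<le> finf (preopen X \<tau> ` F)"
          proof (rule finf_greatest)
            show "finf (\<beta> ` F) \<le> 1" using finfF[OF F(1)] by simp
            show "\<forall>s\<in>preopen X \<tau> ` F. finf (\<beta> ` F) \<le> s"
            proof
              fix s assume "s \<in> preopen X \<tau> ` F"
              then obtain B where B: "B \<in> F" "s = preopen X \<tau> B" by auto
              have "finf (\<beta> ` F) \<le> \<beta> B" using B F(1) Bb by (intro finf_lower) auto
              also have "\<dots> \<le> s" using B F(1) assms(3) by auto
              finally show "finf (\<beta> ` F) \<le> s" .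
            qed
          qed
          also have "\<dots> \<le> preopen X \<tau> A" using preopen_union[OF ff, of F] F(2) by simp
          finally show "s \<le> preopen X \<tau> A" using F(3) by simp
        qed
      qed
      have le2: "preopen X \<tau> A \<le> union_closure X \<beta> A"
      proof (rule ccontr)
        assume nt: "\<not> preopen X \<tau> A \<le> union_closure X \<beta> A"
        define u where "u = union_closure X \<beta> A"
        define t where "t = preopen X \<tau> A"
        define c where "c = (u + t) / 2"
        have ut: "u < t" using nt unfolding u_def t_def by simp
        have t1: "t \<le> 1" using preopen_01[OF ff] t_def by blast
        have u0: "0 \<le> u" unfolding u_def union_closure_def
          using finfF by (intro conjunct1[OF fsup_01]) auto
        have ex: "\<forall>x\<in>A. \<exists>B. x \<in> B \<and> B \<subseteq> A \<and> c < \<beta> B"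
        proof
          fix x assume xA: "x \<in> A"
          have "t \<le> pre_nbhd X \<tau> x A" unfolding pre_nbhd_def t_def
            using xA preopen_01[OF ff] by (intro fsup_upper) auto
          also have "\<dots> \<le> fsup {\<beta> B | B. x \<in> B \<and> B \<subseteq> A}"
            using pb xA AX unfolding is_pre_base_def by auto
          finally have "c < fsup {\<beta> B | B. x \<in> B \<and> B \<subseteq> A}" using ut c_def by simp
          then have "\<exists>s\<in>{\<beta> B | B. x \<in> B \<and> B \<subseteq> A}. c < s"
            using u0 ut c_def AX Bb by (intro fsup_gtD) auto
          then show "\<exists>B. x \<in> B \<and> B \<subseteq> A \<and> c < \<beta> B" by auto
        qed
        define g where "g x = (SOME B. x \<in> B \<and> B \<subseteq> A \<and> c < \<beta> B)" for x
        have g: "\<And>x. x \<in> A \<Longrightarrow> x \<in> g x \<and> g x \<subseteq> A \<and> c < \<beta> (g x)"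
          unfolding g_def using ex by (metis (mono_tags, lifting) someI_ex)
        have FX: "g ` A \<subseteq> Pow X" using g AX by auto
        have FU: "\<Union>(g ` A) = A" using g by blast
        have "c \<le> finf (\<beta> ` g ` A)"
          proof (rule finf_greatest)
          show "c \<le> 1" using c_def ut t1 by simp
          show "\<forall>s\<in>\<beta> ` g ` A. c \<le> s" using g by (auto intro: less_imp_le)
        qed
        also have "\<dots> \<le> u" unfolding u_def union_closure_def
          using FX FU finfF by (intro fsup_upper) auto
        finally show False using ut c_def by simp
      qed
      show "preopen X \<tau> A = union_closure X \<beta> A" using le1 le2 by simp
    qed
  next
    assume eq: "\<forall>A. A \<subseteq> X \<longrightarrow> preopen X \<tau> A = union_closure X \<beta> A"
    show "is_pre_base X \<tau> \<beta>"
      unfolding is_pre_base_def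
    proof (intro conjI assms(3) ballI allI impI)
      fix x A assume xX: "x \<in> X" and AX: "A \<subseteq> X"
      let ?S = "{\<beta> B | B. x \<in> B \<and> B \<subseteq> A}"
      have S1: "\<forall>s\<in>?S. s \<le> 1" using AX Bb by auto
      show "pre_nbhd X \<tau> x A \<le> fsup ?S"
        unfolding pre_nbhd_def
      proof (rule fsup_least)
        show "0 \<le> fsup ?S" using AX Bb by (intro conjunct1[OF fsup_01]) auto
        show "\<forall>s\<in>{preopen X \<tau> B |B. x \<in> B \<and> B \<subseteq> A}. s \<le> fsup ?S"
        proof
          fix s assume "s \<in> {preopen X \<tau> B |B. x \<in> B \<and> B \<subseteq> A}"
          then obtain B where B: "x \<in> B" "B \<subseteq> A" "s = preopen X \<tau> B" by auto
          have "s = union_closure X \<beta> B" using B AX eq by auto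
          also have "\<dots> \<le> fsup ?S" unfolding union_closure_def
          proof (rule fsup_least)
            show "0 \<le> fsup ?S" using AX Bb by (intro conjunct1[OF fsup_01]) auto
            show "\<forall>s\<in>{finf (\<beta> ` \<B>) |\<B>. \<B> \<subseteq> Pow X \<and> \<Union> \<B> = B}. s \<le> fsup ?S"
            proof
              fix s assume "s \<in> {finf (\<beta> ` \<B>) |\<B>. \<B> \<subseteq> Pow X \<and> \<Union> \<B> = B}"
              then obtain F where F: "F \<subseteq> Pow X" "\<Union>F = B" "s = finf (\<beta> ` F)" by auto
              then obtain C where C: "C \<in> F" "x \<in> C" using B(1) by auto
              have "s \<le> \<beta> C" using F C Bb by (auto intro!: finf_lower)
              also have "\<dots> \<le> fsup ?S" proof (rule fsup_upper[OF S1])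
                show "\<beta> C \<in> ?S" using C F B(2) by blast
              qed
              finally show "s \<le> fsup ?S" .
            qed
          qed
          finally show "s \<le> fsup ?S" .
        qed
      qed
    qed
  qed
qed

end
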